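(* Let $G\subsetneq\mathbb{R}^n$ be a domain. For all $z_1,z_2\in G$ and all $p>r\ge1$, \[ b_{G,r}(z_1,z_2)\le b_{G,p}(z_1,z_2)\le 2^{\frac1r-\frac1p}\,b_{G,r}(z_1,z_2). \] In particular, for $p\ge1$, $s_G(z_1,z_2)\le b_{G,p}(z_1,z_2)\le 2^{1-1/p}s_G(z_1,z_2)$. Moreover, if $n=2$, then for every $p\ge1$, \[ \sup\{b_{G,p}(z_1,z_2):z_1,z_2\in G\}=2^{1-1/p}. \]
   Context: For a domain $G\subsetneq\mathbb{R}^n$, $p\ge1$ and $z_1,z_2\in G$, $b_{G,p}(z_1,z_2)=\sup_{z\in\partial G}\frac{|z_1-z_2|}{\sqrt[p]{|z_1-z|^p+|z-z_2|^p}}$, and $s_G=b_{G,1}$, i.e. $s_G(z_1,z_2)=\sup_{z\in\partial G}\frac{|z_1-z_2|}{|z_1-z|+|z-z_2|}$. *)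

theory Defs
  imports "HOL-Analysis.Analysis"
begin

definition b_fun :: "'a::euclidean_space set \<Rightarrow> real \<Rightarrow> 'a \<Rightarrow> 'a \<Rightarrow> real" where
  "b_fun G p z1 z2 = (SUP z\<in>frontier G.
      norm (z1 - z2) / (norm (z1 - z) powr p + norm (z - z2) powr p) powr (1 / p))"

definition s_fun :: "'a::euclidean_space set \<Rightarrow> 'a \<Rightarrow> 'a \<Rightarrow> real" where
  "s_fun G = b_fun G 1"

end

theory Submission
  imports Defs
begin

lemma pm_mono:
  fixes a b r p :: real
  assumes a: "0 < a" and b: "0 < b" and r: "0 < r" and rp: "r \<le> p"
  shows "(a powr p + b powr p) powr (1/p) \<le> (a powr r + b powr r) powr (1/r)"
proof -
  define S where "S = a powr r + b powr r"
  define q where "q = p / r"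
  have S: "S > 0" using a b by (simp add: S_def add_pos_pos)
  have q: "q \<ge> 1" using r rp by (simp add: q_def)
  have p: "p > 0" using r rp by simp
  have x1: "a powr r / S \<le> 1" "b powr r / S \<le> 1" using S a b by (auto simp: S_def)
  have "(a powr r / S) powr q \<le> (a powr r / S) powr 1"
    by (rule powr_mono') (use q x1 S in auto)
  moreover have "(b powr r / S) powr q \<le> (b powr r / S) powr 1"
    by (rule powr_mono') (use q x1 S in auto)
  moreover have "(a powr r / S) powr q = a powr p / S powr q"
    using r by (simp add: powr_divide powr_powr q_def)
  moreover have "(b powr r / S) powr q = b powr p / S powr q"
    using r by (simp add: powr_divide powr_powr q_def)
  ultimately have "a powr p / S powr q + b powr p / S powr q \<le> a powr r / S + b powr r / S"
    using S by simp
  also have "\<dots> = 1" using S by (simp add: S_def add_divide_distrib[symmetric])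
  finally have "a powr p + b powr p \<le> S powr q"
    using S by (simp add: add_divide_distrib[symmetric] divide_le_eq)
  hence "(a powr p + b powr p) powr (1/p) \<le> (S powr q) powr (1/p)"
    by (rule powr_mono2[rotated 2]) (use p in auto)
  also have "\<dots> = S powr (1/r)" using p r by (simp add: powr_powr q_def)
  finally show ?thesis by (simp add: S_def)
qed

lemma pm_conv:
  fixes a b r p :: real
  assumes a: "0 < a" and b: "0 < b" and r: "0 < r" and rp: "r \<le> p"
  shows "2 powr (1/p - 1/r) * (a powr r + b powr r) powr (1/r) \<le> (a powr p + b powr p) powr (1/p)"
proof -
  define x where "x = a powr r"
  define y where "y = b powr r"
  define q where "q = p / r"
  have q: "q \<ge> 1" using r rp by (simp add: q_def)
  have p: "p > 0" using r rp by simp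
  have xy: "x > 0" "y > 0" using a b by (auto simp: x_def y_def)
  have "((1 - 1/2) *\<^sub>R x + (1/2) *\<^sub>R y) powr q \<le> (1 - 1/2) * x powr q + (1/2) * y powr q"
    by (rule convex_onD[OF powr_convex[OF q]]) (use xy in auto)
  moreover have "x powr q = a powr p" "y powr q = b powr p"
    using r by (simp_all add: x_def y_def powr_powr q_def)
  ultimately have "((x + y) / 2) powr q \<le> (a powr p + b powr p) / 2"
    by (simp add: field_simps)
  hence "(((x + y) / 2) powr q) powr (1/p) \<le> ((a powr p + b powr p) / 2) powr (1/p)"
    by (rule powr_mono2[rotated 2]) (use p xy in auto)
  also have "(((x + y) / 2) powr q) powr (1/p) = (x+y) powr (1/r) / 2 powr (1/r)"
    using p r xy by (simp add: powr_powr q_def powr_divide)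
  also have "((a powr p + b powr p) / 2) powr (1/p) = (a powr p + b powr p) powr (1/p) / 2 powr (1/p)"
    using a b by (simp add: powr_divide)
  finally have "(x+y) powr (1/r) * 2 powr (1/p) / 2 powr (1/r) \<le> (a powr p + b powr p) powr (1/p)"
    by (simp add: field_simps)
  thus ?thesis by (simp add: powr_diff x_def y_def mult.commute)
qed

lemma nrm2:
  fixes u n :: "'a::euclidean_space"
  assumes "inner u n = 0" "norm u = 1" "norm n = 1"
  shows "norm (a *\<^sub>R u + b *\<^sub>R n) = sqrt (a^2 + b^2)"
proof -
  have "inner u u = 1" "inner n n = 1" using assms by (simp_all add: dot_square_norm)
  moreover have "inner n u = 0" using assms by (simp add: inner_commute)
  ultimately show ?thesis using assms(1)
    by (simp add: norm_eq_sqrt_inner inner_add_left inner_add_right power2_eq_square)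
qed

lemma lower_pt:
  fixes G :: "'a::euclidean_space set"
  assumes "open G" "G \<noteq> {}" "G \<noteq> UNIV" "DIM('a) \<ge> 2"
  obtains z' d u n where "z' \<in> frontier G" "d > 0" "norm u = 1" "norm n = 1" "inner u n = 0"
     "ball (z' + d *\<^sub>R n) d \<subseteq> G"
proof -
  obtain w where w: "w \<in> G" using assms by auto
  have cl: "closed (- G)" using assms by (simp add: closed_Compl)
  have ne: "- G \<noteq> {}" using assms by auto
  obtain z' where z': "z' \<in> - G" "\<And>y. y \<in> - G \<Longrightarrow> dist w z' \<le> dist w y"
    using distance_attains_inf[OF cl ne, of w] by blast
  define d where "d = dist w z'"
  have d: "d > 0" using w z' by (auto simp: d_def)
  have ball: "ball w d \<subseteq> G"
  proof
    fix y assume "y \<in> ball w d"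
    then show "y \<in> G" using z'(2)[of y] by (force simp: d_def)
  qed
  have "z' \<in> cball w d" by (simp add: d_def)
  hence "z' \<in> closure (ball w d)" using d by simp
  hence "z' \<in> closure G" using closure_mono[OF ball] by blast
  moreover have "z' \<notin> interior G" using z' assms(1) by (simp add: interior_open)
  ultimately have fr: "z' \<in> frontier G" by (simp add: frontier_def)
  define n where "n = (w - z') /\<^sub>R d"
  have nn: "norm n = 1" using d by (simp add: n_def d_def dist_norm norm_minus_commute)
  have wn: "w = z' + d *\<^sub>R n" using d by (simp add: n_def)
  obtain v where v: "v \<noteq> 0" "orthogonal n v" using orthogonal_to_vector_exists[OF assms(4)] by blast
  define u where "u = v /\<^sub>R norm v"
  have "norm u = 1" using v by (simp add: u_def)
  moreover have "inner u n = 0" using v by (simp add: u_def orthogonal_def inner_commute)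
  ultimately show ?thesis using that[OF fr d _ nn _ ] ball wn by auto
qed

definition rat :: "real \<Rightarrow> 'a::euclidean_space \<Rightarrow> 'a \<Rightarrow> 'a \<Rightarrow> real" where
  "rat p z1 z2 z = norm (z1 - z2) / (norm (z1 - z) powr p + norm (z - z2) powr p) powr (1 / p)"

lemma b_fun_rat: "b_fun G p z1 z2 = (SUP z\<in>frontier G. rat p z1 z2 z)"
  by (simp add: b_fun_def rat_def)

lemma rat_bound:
  assumes p: "1 \<le> p" and "z \<noteq> z1" "z \<noteq> z2"
  shows "rat p z1 z2 z \<le> 2 powr (1 - 1/p)"
proof -
  define a where "a = norm (z1 - z)"
  define b where "b = norm (z - z2)"
  have ab: "a > 0" "b > 0" using assms by (auto simp: a_def b_def)
  define D where "D = (a powr p + b powr p) powr (1/p)"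
  have h: "2 powr (1/p - 1) * (a + b) \<le> D"
    using pm_conv[OF ab, of 1 p] p ab by (simp add: D_def)
  have "a powr p + b powr p > 0" using ab by (simp add: add_pos_pos)
  hence D: "D > 0" by (simp add: D_def)
  have N: "norm (z1 - z2) \<le> a + b" unfolding a_def b_def using norm_triangle_ineq[of "z1 - z" "z - z2"] by simp
  have "rat p z1 z2 z = norm (z1 - z2) / D" unfolding rat_def D_def a_def b_def by (rule refl)
  also have "\<dots> \<le> (a + b) / D" using N D by (simp add: divide_right_mono)
  also have "\<dots> \<le> 2 powr (1 - 1/p)"
  proof -
    have k: "2 powr (1 - 1/p) * 2 powr (1/p - 1) = 1" by (simp flip: powr_add)
    have "a + b = (2 powr (1 - 1/p) * 2 powr (1/p - 1)) * (a + b)" by (simp only: k mult_1)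
    also have "\<dots> = 2 powr (1 - 1/p) * (2 powr (1/p - 1) * (a + b))" by (simp only: mult.assoc)
    also have "\<dots> \<le> 2 powr (1 - 1/p) * D" by (rule mult_left_mono[OF h]) simp
    finally have "a + b \<le> 2 powr (1 - 1/p) * D" .
    thus ?thesis using D by (simp add: divide_le_eq mult.commute)
  qed
  finally show ?thesis .
qed

lemma rat_cmp:
  assumes r: "1 \<le> r" "r \<le> p" and "z \<noteq> z1" "z \<noteq> z2"
  shows "rat r z1 z2 z \<le> rat p z1 z2 z \<and> rat p z1 z2 z \<le> 2 powr (1/r - 1/p) * rat r z1 z2 z"
proof -
  define a where "a = norm (z1 - z)"
  define b where "b = norm (z - z2)"
  have ab: "a > 0" "b > 0" using assms by (auto simp: a_def b_def)
  define Dp where "Dp = (a powr p + b powr p) powr (1/p)"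
  define Dr where "Dr = (a powr r + b powr r) powr (1/r)"
  have "a powr p + b powr p > 0" "a powr r + b powr r > 0" using ab by (simp_all add: add_pos_pos)
  hence Dp: "Dp > 0" and Dr: "Dr > 0" by (simp_all add: Dp_def Dr_def)
  have m: "Dp \<le> Dr" using pm_mono[OF ab, of r p] r by (simp add: Dp_def Dr_def)
  have c: "2 powr (1/p - 1/r) * Dr \<le> Dp" using pm_conv[OF ab, of r p] r by (simp add: Dp_def Dr_def)
  have e1: "rat p z1 z2 z = norm (z1 - z2) / Dp" unfolding rat_def Dp_def a_def b_def by (rule refl)
  have e2: "rat r z1 z2 z = norm (z1 - z2) / Dr" unfolding rat_def Dr_def a_def b_def by (rule refl)
  have 1: "norm (z1 - z2) / Dr \<le> norm (z1 - z2) / Dp"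
    using m Dp by (simp add: divide_left_mono)
  have "norm (z1 - z2) / Dp \<le> norm (z1 - z2) / (2 powr (1/p - 1/r) * Dr)"
    using c Dr Dp by (intro divide_left_mono) auto
  also have "\<dots> = 2 powr (1/r - 1/p) * (norm (z1 - z2) / Dr)"
  proof -
    have k: "2 powr (1/r - 1/p) * 2 powr (1/p - 1/r) = 1" by (simp flip: powr_add)
    have "norm (z1 - z2) / (2 powr (1/p - 1/r) * Dr) = (2 powr (1/r - 1/p) * 2 powr (1/p - 1/r)) * (norm (z1 - z2) / (2 powr (1/p - 1/r) * Dr))"
      by (simp only: k mult_1)
    also have "\<dots> = 2 powr (1/r - 1/p) * (norm (z1 - z2) / Dr)"
      by simp
    finally show ?thesis .
  qed
  finally show ?thesis using 1 e1 e2 by simp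
qed

lemma lower_bound:
  fixes G :: "'a::euclidean_space set"
  assumes "open G" "G \<noteq> {}" "G \<noteq> UNIV" "DIM('a) = 2" "1 \<le> p"
    and bdd: "bdd_above ((\<lambda>zz. b_fun G p (fst zz) (snd zz)) ` (G \<times> G))"
    and bddz: "\<And>z1 z2. z1 \<in> G \<Longrightarrow> z2 \<in> G \<Longrightarrow> bdd_above (rat p z1 z2 ` frontier G)"
  shows "2 powr (1 - 1/p) \<le> (SUP zz\<in>G \<times> G. b_fun G p (fst zz) (snd zz))"
proof -
  obtain z' d u n where fr: "z' \<in> frontier G" and d: "d > 0" and u: "norm u = 1"
    and n: "norm n = 1" and un: "inner u n = 0" and ball: "ball (z' + d *\<^sub>R n) d \<subseteq> G"
    by (rule lower_pt[OF assms(1,2,3)]) (use assms(4) in auto)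
  define S where "S = (SUP zz\<in>G \<times> G. b_fun G p (fst zz) (snd zz))"
  define c where "c = 2 powr (1 - 1/p)"
  have key: "c / sqrt (1 + t^2 / d^2) \<le> S" if t: "0 < t" "t < d" for t
  proof -
    define s where "s = t^2 / d"
    define z1 where "z1 = z' + t *\<^sub>R u + s *\<^sub>R n"
    define z2 where "z2 = z' - t *\<^sub>R u + s *\<^sub>R n"
    have s: "s > 0" "s < t" using t d by (auto simp: s_def power2_eq_square field_simps)
    have inb: "t^2 + (s - d)^2 < d^2"
    proof -
      have "s * d = t^2" using d by (simp add: s_def)
      hence "t^2 + (s - d)^2 = d^2 - t^2 + s^2" by (simp add: power2_eq_square algebra_simps)
      thus ?thesis using s by (smt (verit) mult_strict_mono power2_eq_square)
    qed
    have "dist (z' + d *\<^sub>R n) z1 = norm (t *\<^sub>R u + (s - d) *\<^sub>R n)"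
      by (simp add: dist_norm z1_def norm_minus_commute algebra_simps)
    also have "\<dots> = sqrt (t^2 + (s-d)^2)" by (rule nrm2[OF un u n])
    also have "\<dots> < d" using inb d by (metis abs_of_pos real_sqrt_abs real_sqrt_less_mono)
    finally have z1G: "z1 \<in> G" using ball by auto
    have "dist (z' + d *\<^sub>R n) z2 = norm ((-t) *\<^sub>R u + (s - d) *\<^sub>R n)"
      by (simp add: dist_norm z2_def norm_minus_commute algebra_simps)
    also have "\<dots> = sqrt (t^2 + (s-d)^2)" using nrm2[OF un u n, of "-t" "s-d"] by simp
    also have "\<dots> < d" using inb d by (metis abs_of_pos real_sqrt_abs real_sqrt_less_mono)
    finally have z2G: "z2 \<in> G" using ball by auto
    have N1: "norm (z1 - z2) = 2 * t"
      using t u by (simp add: z1_def z2_def algebra_simps flip: scaleR_2)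
    define A where "A = sqrt (t^2 + s^2)"
    have A1: "norm (z1 - z') = A" using nrm2[OF un u n, of t s] by (simp add: z1_def A_def)
    have A2: "norm (z' - z2) = A" using nrm2[OF un u n, of t "-s"]
      by (simp add: z2_def A_def algebra_simps)
    have A: "A > 0" using t by (simp add: A_def add_pos_nonneg)
    have sq: "A = t * sqrt (1 + t^2/d^2)"
    proof -
      have "t^2 + s^2 = t^2 * (1 + t^2/d^2)" using d by (simp add: s_def field_simps power2_eq_square)
      thus ?thesis using t by (simp add: A_def real_sqrt_mult)
    qed
    have "rat p z1 z2 z' = 2 * t / (2 * A powr p) powr (1/p)"
      by (simp add: rat_def N1 A1 A2)
    also have "\<dots> = 2 * t / (2 powr (1/p) * A)"
      using A assms(5) by (simp add: powr_mult powr_powr)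
    also have "\<dots> = c / sqrt (1 + t^2 / d^2)"
      using t by (simp add: sq c_def powr_diff field_simps)
    finally have "c / sqrt (1 + t^2 / d^2) = rat p z1 z2 z'" by simp
    also have "\<dots> \<le> b_fun G p z1 z2"
      unfolding b_fun_rat by (rule cSUP_upper[OF fr bddz[OF z1G z2G]])
    also have "\<dots> \<le> S" unfolding S_def
      using cSUP_upper[OF _ bdd, of "(z1, z2)"] z1G z2G by simp
    finally show ?thesis .
  qed
  have lim: "((\<lambda>t. c / sqrt (1 + t^2 / d^2)) \<longlongrightarrow> c / sqrt (1 + 0^2 / d^2)) (at_right 0)"
    using d by (intro tendsto_intros) auto
  have ev: "eventually (\<lambda>t. c / sqrt (1 + t^2 / d^2) \<le> S) (at_right 0)"
    using eventually_at_right_real[OF d] by eventually_elim (use key in auto)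
  have "c \<le> S"
    using tendsto_le[OF trivial_limit_at_right_real tendsto_const lim ev] by simp
  thus ?thesis by (simp add: S_def c_def)
qed

theorem theorem3p6:
  fixes G :: "'a::euclidean_space set"
  assumes "open G" and "connected G" and "G \<noteq> {}" and "G \<noteq> UNIV"
  shows "(\<forall>z1\<in>G. \<forall>z2\<in>G. \<forall>p r. 1 \<le> r \<and> r < p \<longrightarrow>
            b_fun G r z1 z2 \<le> b_fun G p z1 z2 \<and>
            b_fun G p z1 z2 \<le> 2 powr (1/r - 1/p) * b_fun G r z1 z2)
       \<and> (\<forall>z1\<in>G. \<forall>z2\<in>G. \<forall>p. 1 \<le> p \<longrightarrow>
            s_fun G z1 z2 \<le> b_fun G p z1 z2 \<and>
            b_fun G p z1 z2 \<le> 2 powr (1 - 1/p) * s_fun G z1 z2)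
       \<and> (DIM('a) = 2 \<longrightarrow> (\<forall>p. 1 \<le> p \<longrightarrow>
            (SUP zz\<in>G \<times> G. b_fun G p (fst zz) (snd zz)) = 2 powr (1 - 1/p)))"
proof -
  have frne: "frontier G \<noteq> {}" by (rule frontier_not_empty[OF assms(3,4)])
  have nfr: "z \<noteq> z1" if "z \<in> frontier G" "z1 \<in> G" for z z1
    using that assms(1) by (auto simp: frontier_def interior_open)
  have bddz: "bdd_above (rat p z1 z2 ` frontier G)" if "1 \<le> p" "z1 \<in> G" "z2 \<in> G" for p z1 z2
  proof (rule bdd_aboveI2[where M="2 powr (1 - 1/p)"])
    fix z assume "z \<in> frontier G"
    show "rat p z1 z2 z \<le> 2 powr (1 - 1/p)"
      by (rule rat_bound[OF that(1)]) (use nfr[OF _ that(2)] nfr[OF _ that(3)] \<open>z \<in> frontier G\<close> in auto)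
  qed
  have ub: "b_fun G p z1 z2 \<le> 2 powr (1 - 1/p)" if "1 \<le> p" "z1 \<in> G" "z2 \<in> G" for p z1 z2
    unfolding b_fun_rat
  proof (rule cSUP_least[OF frne])
    fix z assume "z \<in> frontier G"
    show "rat p z1 z2 z \<le> 2 powr (1 - 1/p)"
      by (rule rat_bound[OF that(1)]) (use nfr[OF _ that(2)] nfr[OF _ that(3)] \<open>z \<in> frontier G\<close> in auto)
  qed
  have P1: "b_fun G r z1 z2 \<le> b_fun G p z1 z2 \<and>
            b_fun G p z1 z2 \<le> 2 powr (1/r - 1/p) * b_fun G r z1 z2"
    if z: "z1 \<in> G" "z2 \<in> G" and rp: "1 \<le> r" "r \<le> p" for z1 z2 p r
  proof
    have p: "1 \<le> p" using rp by simp
    show "b_fun G r z1 z2 \<le> b_fun G p z1 z2" unfolding b_fun_rat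
    proof (rule cSUP_mono[OF frne bddz[OF p z]])
      fix n assume nf: "n \<in> frontier G"
      have "n \<noteq> z1" "n \<noteq> z2" using nfr[OF nf] z by auto
      from conjunct1[OF rat_cmp[OF rp this]] have "rat r z1 z2 n \<le> rat p z1 z2 n" .
      thus "\<exists>m\<in>frontier G. rat r z1 z2 n \<le> rat p z1 z2 m" using nf by blast
    qed
    have "(SUP z\<in>frontier G. rat p z1 z2 z) \<le> 2 powr (1/r - 1/p) * (SUP z\<in>frontier G. rat r z1 z2 z)"
    proof (rule cSUP_least[OF frne])
      fix z assume zf: "z \<in> frontier G"
      have "z \<noteq> z1" "z \<noteq> z2" using nfr[OF zf] z by auto
      from conjunct2[OF rat_cmp[OF rp this]]
      have "rat p z1 z2 z \<le> 2 powr (1/r - 1/p) * rat r z1 z2 z" .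
      also have "\<dots> \<le> 2 powr (1/r - 1/p) * (SUP z\<in>frontier G. rat r z1 z2 z)"
      proof (rule mult_left_mono)
        show "rat r z1 z2 z \<le> (SUP z\<in>frontier G. rat r z1 z2 z)"
          by (rule cSUP_upper[OF zf bddz[OF rp(1) z]])
      qed simp
      finally show "rat p z1 z2 z \<le> 2 powr (1/r - 1/p) * (SUP z\<in>frontier G. rat r z1 z2 z)" .
    qed
    thus "b_fun G p z1 z2 \<le> 2 powr (1/r - 1/p) * b_fun G r z1 z2" unfolding b_fun_rat .
  qed
  have P3: "(SUP zz\<in>G \<times> G. b_fun G p (fst zz) (snd zz)) = 2 powr (1 - 1/p)"
    if dim: "DIM('a) = 2" and p: "1 \<le> p" for p
  proof (rule antisym)
    show "(SUP zz\<in>G \<times> G. b_fun G p (fst zz) (snd zz)) \<le> 2 powr (1 - 1/p)"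
    proof (rule cSUP_least)
      show "G \<times> G \<noteq> {}" using assms(3) by simp
      fix zz assume "zz \<in> G \<times> G"
      thus "b_fun G p (fst zz) (snd zz) \<le> 2 powr (1 - 1/p)" using ub[OF p] by (simp add: mem_Times_iff)
    qed
    have bdd: "bdd_above ((\<lambda>zz. b_fun G p (fst zz) (snd zz)) ` (G \<times> G))"
    proof (rule bdd_aboveI2[where M="2 powr (1 - 1/p)"])
      fix zz assume "zz \<in> G \<times> G"
      thus "b_fun G p (fst zz) (snd zz) \<le> 2 powr (1 - 1/p)" using ub[OF p] by (simp add: mem_Times_iff)
    qed
    show "2 powr (1 - 1/p) \<le> (SUP zz\<in>G \<times> G. b_fun G p (fst zz) (snd zz))"
      by (rule lower_bound[OF assms(1,3,4) dim p bdd bddz[OF p]])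
  qed
  have P2: "s_fun G z1 z2 \<le> b_fun G p z1 z2 \<and>
            b_fun G p z1 z2 \<le> 2 powr (1 - 1/p) * s_fun G z1 z2"
    if "z1 \<in> G" "z2 \<in> G" "1 \<le> p" for z1 z2 p
    using P1[OF that(1,2) order_refl that(3)] unfolding s_fun_def by simp
  have P1': "b_fun G r z1 z2 \<le> b_fun G p z1 z2 \<and>
            b_fun G p z1 z2 \<le> 2 powr (1/r - 1/p) * b_fun G r z1 z2"
    if "z1 \<in> G" "z2 \<in> G" "1 \<le> r \<and> r < p" for z1 z2 p r
    using P1[OF that(1,2), of r p] that(3) by simp
  show ?thesis
  proof (intro conjI ballI allI impI)
    fix z1 z2 and p r :: real assume a: "z1 \<in> G" "z2 \<in> G" "1 \<le> r \<and> r < p"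
    show "b_fun G r z1 z2 \<le> b_fun G p z1 z2" using P1'[OF a] by (rule conjunct1)
    show "b_fun G p z1 z2 \<le> 2 powr (1/r - 1/p) * b_fun G r z1 z2" using P1'[OF a] by (rule conjunct2)
  next
    fix z1 z2 and p :: real assume a: "z1 \<in> G" "z2 \<in> G" "1 \<le> p"
    show "s_fun G z1 z2 \<le> b_fun G p z1 z2" using P2[OF a] by (rule conjunct1)
    show "b_fun G p z1 z2 \<le> 2 powr (1 - 1/p) * s_fun G z1 z2" using P2[OF a] by (rule conjunct2)
  next
    fix p :: real assume "DIM('a) = 2" "1 \<le> p"
    thus "(SUP zz\<in>G \<times> G. b_fun G p (fst zz) (snd zz)) = 2 powr (1 - 1/p)" by (rule P3)
  qed
qed

end
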